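(* Let $\mathbb{M}$ be a monster model of $T_{\mathrm{Ham}}$ with underlying set $G_\infty$, and let $I=I_1+(c)+I_2$ be an ordered index set with $I_1,I_2$ infinite. Let $(a_ia_i')_{i\in I}$ be an indiscernible sequence from $G\times v(G)$ such that $(a_i)_{i\in I}$ and $(a_i')_{i\in I}$ are each nonconstant, and let $b\in G$ be such that $(a_ia_i')_{i\in I_1+I_2}$ is $b$-indiscernible. If $v(a_i-b)=a_i'$ for all $i\neq c$, then $v(a_c-b)=a_c'$.
   Context: Let $C$ be an ordered field. A Hamel space over $C$ is a $C$-vector space $G$ with two total orderings $<_0,<_1$, each making $G$ an ordered $C$-vector space, and a map $v:G\to G_\infty=G\cup\{\infty\}$ ($G<_0\infty$, $G<_1\infty$) such that for all $x,y\in G$, $\lambda\in C^{\times}$: $v(x)=\infty$ iff $x=0$; $v(x+y)\ge_0\min_0(v(x),v(y))$; $v(\lambda x)=v(x)$; $0<_1x<_1y\Rightarrow v(x)\ge_0v(y)$; $v(v(x))=v(x)$ (with $v(\infty)=\infty$); $v(x)>_10$. It is independent if for all $a_0<_0b_0$, $a_1<_1b_1$ in $G\cup\{\pm\infty\}$ some $z\in G$ has $a_0<_0z<_0b_0$, $a_1<_1z<_1b_1$; dense if for all $a<_0b$ in $G$ some $c$ has $a<_0v(c)<_0b$. $T_{\mathrm{Ham}}$ is the complete theory in the language $\{0,+,(\lambda_c)_{c\in C},<_0,<_1,v,\infty\}$ on universe $G_\infty$ (with $\infty$ absorbing for $+$, $\lambda_c$, $v$) whose models are exactly the independent dense Hamel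 spaces over $C$. Indiscernible means $\emptyset$-indiscernible. *)

theory Defs
  imports Main "HOL.Vector_Spaces"
begin

section \<open>Extended orders on G_infinity = 'g option (None = infinity, above everything)\<close>

fun lt_ext :: "('g \<Rightarrow> 'g \<Rightarrow> bool) \<Rightarrow> 'g option \<Rightarrow> 'g option \<Rightarrow> bool" where
  "lt_ext lt (Some x) (Some y) = lt x y"
| "lt_ext lt (Some x) None = True"
| "lt_ext lt None y = False"

definition le_ext :: "('g \<Rightarrow> 'g \<Rightarrow> bool) \<Rightarrow> 'g option \<Rightarrow> 'g option \<Rightarrow> bool" where
  "le_ext lt a b \<longleftrightarrow> a = b \<or> lt_ext lt a b"

definition min_ext :: "('g \<Rightarrow> 'g \<Rightarrow> bool) \<Rightarrow> 'g option \<Rightarrow> 'g option \<Rightarrow> 'g option" where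
  "min_ext lt a b = (if le_ext lt a b then a else b)"

fun v_ext :: "('g \<Rightarrow> 'g option) \<Rightarrow> 'g option \<Rightarrow> 'g option" where
  "v_ext v None = None"
| "v_ext v (Some x) = v x"

definition ordered_vs :: "('c::linordered_field \<Rightarrow> 'g::ab_group_add \<Rightarrow> 'g) \<Rightarrow> ('g \<Rightarrow> 'g \<Rightarrow> bool) \<Rightarrow> bool" where
  "ordered_vs scale lt \<longleftrightarrow>
     (\<forall>x. \<not> lt x x) \<and>
     (\<forall>x y z. lt x y \<and> lt y z \<longrightarrow> lt x z) \<and>
     (\<forall>x y. x \<noteq> y \<longrightarrow> lt x y \<or> lt y x) \<and>
     (\<forall>x y z. lt x y \<longrightarrow> lt (x + z) (y + z)) \<and>
     (\<forall>x l. lt 0 x \<and> 0 < l \<longrightarrow> lt 0 (scale l x))"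

definition hamel_space ::
  "('c::linordered_field \<Rightarrow> 'g::ab_group_add \<Rightarrow> 'g) \<Rightarrow> ('g \<Rightarrow> 'g \<Rightarrow> bool) \<Rightarrow> ('g \<Rightarrow> 'g \<Rightarrow> bool)
     \<Rightarrow> ('g \<Rightarrow> 'g option) \<Rightarrow> bool" where
  "hamel_space scale lt0 lt1 v \<longleftrightarrow>
     vector_space scale \<and> ordered_vs scale lt0 \<and> ordered_vs scale lt1 \<and>
     (\<forall>x. v x = None \<longleftrightarrow> x = 0) \<and>
     (\<forall>x y. le_ext lt0 (min_ext lt0 (v x) (v y)) (v (x + y))) \<and>
     (\<forall>x l. l \<noteq> 0 \<longrightarrow> v (scale l x) = v x) \<and>
     (\<forall>x y. lt1 0 x \<and> lt1 x y \<longrightarrow> le_ext lt0 (v y) (v x)) \<and>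
     (\<forall>x. v_ext v (v x) = v x) \<and>
     (\<forall>x. lt_ext lt1 (Some 0) (v x))"

text \<open>Independence: endpoints in G \<union> {-infinity, +infinity}; a lower endpoint None means
  -infinity, an upper endpoint None means +infinity.\<close>
definition above :: "('g \<Rightarrow> 'g \<Rightarrow> bool) \<Rightarrow> 'g option \<Rightarrow> 'g \<Rightarrow> bool" where
  "above lt a z = (case a of None \<Rightarrow> True | Some x \<Rightarrow> lt x z)"

definition below :: "('g \<Rightarrow> 'g \<Rightarrow> bool) \<Rightarrow> 'g \<Rightarrow> 'g option \<Rightarrow> bool" where
  "below lt z b = (case b of None \<Rightarrow> True | Some y \<Rightarrow> lt z y)"

definition interval_ok :: "('g \<Rightarrow> 'g \<Rightarrow> bool) \<Rightarrow> 'g option \<Rightarrow> 'g option \<Rightarrow> bool" where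
  "interval_ok lt a b = (case (a, b) of (Some x, Some y) \<Rightarrow> lt x y | _ \<Rightarrow> True)"

definition independent_hs :: "('g \<Rightarrow> 'g \<Rightarrow> bool) \<Rightarrow> ('g \<Rightarrow> 'g \<Rightarrow> bool) \<Rightarrow> bool" where
  "independent_hs lt0 lt1 \<longleftrightarrow>
     (\<forall>a0 b0 a1 b1. interval_ok lt0 a0 b0 \<and> interval_ok lt1 a1 b1 \<longrightarrow>
        (\<exists>z. above lt0 a0 z \<and> below lt0 z b0 \<and> above lt1 a1 z \<and> below lt1 z b1))"

definition dense_hs :: "('g \<Rightarrow> 'g \<Rightarrow> bool) \<Rightarrow> ('g \<Rightarrow> 'g option) \<Rightarrow> bool" where
  "dense_hs lt0 v \<longleftrightarrow>
     (\<forall>a b. lt0 a b \<longrightarrow> (\<exists>c. lt_ext lt0 (Some a) (v c) \<and> lt_ext lt0 (v c) (Some b)))"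

datatype 'c tm = Var nat | Zero | Infty | Add "'c tm" "'c tm" | Smul 'c "'c tm" | Val "'c tm"

datatype 'c fm = Eq "'c tm" "'c tm" | Lt0 "'c tm" "'c tm" | Lt1 "'c tm" "'c tm"
  | Neg "'c fm" | Conj "'c fm" "'c fm" | Ex nat "'c fm"

fun eval_tm :: "('c \<Rightarrow> 'g::ab_group_add \<Rightarrow> 'g) \<Rightarrow> ('g \<Rightarrow> 'g option) \<Rightarrow> (nat \<Rightarrow> 'g option)
    \<Rightarrow> 'c tm \<Rightarrow> 'g option" where
  "eval_tm scale v e (Var k) = e k"
| "eval_tm scale v e Zero = Some 0"
| "eval_tm scale v e Infty = None"
| "eval_tm scale v e (Add s t) =
     (case (eval_tm scale v e s, eval_tm scale v e t) of (Some x, Some y) \<Rightarrow> Some (x + y) | _ \<Rightarrow> None)"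
| "eval_tm scale v e (Smul l t) = map_option (scale l) (eval_tm scale v e t)"
| "eval_tm scale v e (Val t) = v_ext v (eval_tm scale v e t)"

fun sat :: "('c \<Rightarrow> 'g::ab_group_add \<Rightarrow> 'g) \<Rightarrow> ('g \<Rightarrow> 'g \<Rightarrow> bool) \<Rightarrow> ('g \<Rightarrow> 'g \<Rightarrow> bool)
    \<Rightarrow> ('g \<Rightarrow> 'g option) \<Rightarrow> (nat \<Rightarrow> 'g option) \<Rightarrow> 'c fm \<Rightarrow> bool" where
  "sat scale lt0 lt1 v e (Eq s t) = (eval_tm scale v e s = eval_tm scale v e t)"
| "sat scale lt0 lt1 v e (Lt0 s t) = lt_ext lt0 (eval_tm scale v e s) (eval_tm scale v e t)"
| "sat scale lt0 lt1 v e (Lt1 s t) = lt_ext lt1 (eval_tm scale v e s) (eval_tm scale v e t)"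
| "sat scale lt0 lt1 v e (Neg \<phi>) = (\<not> sat scale lt0 lt1 v e \<phi>)"
| "sat scale lt0 lt1 v e (Conj \<phi> \<psi>) = (sat scale lt0 lt1 v e \<phi> \<and> sat scale lt0 lt1 v e \<psi>)"
| "sat scale lt0 lt1 v e (Ex k \<phi>) = (\<exists>x. sat scale lt0 lt1 v (e(k := x)) \<phi>)"

definition seq_env :: "nat \<Rightarrow> (nat \<Rightarrow> 'i) \<Rightarrow> ('i \<Rightarrow> 'g option) \<Rightarrow> ('i \<Rightarrow> 'g option)
    \<Rightarrow> (nat \<Rightarrow> 'g option) \<Rightarrow> nat \<Rightarrow> 'g option" where
  "seq_env n s x y p k =
     (if k < 2 * n then (if even k then x (s (k div 2)) else y (s (k div 2))) else p (k - 2 * n))"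

text \<open>The sequence (x_i y_i)_{i in J} is indiscernible over the parameter set B
  (parameters from B, plus the 0-definable constant infinity).\<close>
definition indisc_over :: "('c \<Rightarrow> 'g::ab_group_add \<Rightarrow> 'g) \<Rightarrow> ('g \<Rightarrow> 'g \<Rightarrow> bool) \<Rightarrow> ('g \<Rightarrow> 'g \<Rightarrow> bool)
    \<Rightarrow> ('g \<Rightarrow> 'g option) \<Rightarrow> 'i::linorder set \<Rightarrow> ('i \<Rightarrow> 'g option) \<Rightarrow> ('i \<Rightarrow> 'g option)
    \<Rightarrow> 'g set \<Rightarrow> bool" where
  "indisc_over scale lt0 lt1 v J x y B \<longleftrightarrow>
     (\<forall>(\<phi> :: 'c fm) n s t p.
        (\<forall>k<n. s k \<in> J \<and> t k \<in> J) \<and>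
        (\<forall>k l. k < l \<and> l < n \<longrightarrow> s k < s l \<and> t k < t l) \<and>
        (\<forall>k. p k \<in> insert None (Some ` B)) \<longrightarrow>
        (sat scale lt0 lt1 v (seq_env n s x y p) \<phi> \<longleftrightarrow> sat scale lt0 lt1 v (seq_env n t x y p) \<phi>))"

end

theory Submission
  imports Defs
begin

lemma ovs_facts:
  assumes "ordered_vs scale lt"
  shows "\<not> lt x x" "lt x y \<Longrightarrow> lt y z \<Longrightarrow> lt x z" "x \<noteq> y \<Longrightarrow> lt x y \<or> lt y x"
  using assms unfolding ordered_vs_def by blast+

lemma L_irrefl: "ordered_vs scale lt \<Longrightarrow> \<not> lt_ext lt a a"
  by (cases a) (auto dest: ovs_facts(1))

lemma L_trans: "ordered_vs scale lt \<Longrightarrow> lt_ext lt a b \<Longrightarrow> lt_ext lt b d \<Longrightarrow> lt_ext lt a d"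
  apply (cases a; cases b; cases d; simp)
  using ovs_facts(2) by metis

lemma L_total: "ordered_vs scale lt \<Longrightarrow> a \<noteq> b \<Longrightarrow> lt_ext lt a b \<or> lt_ext lt b a"
  apply (cases a; cases b; simp)
  using ovs_facts(3) by metis

lemma strict_ultra:
  assumes H: "hamel_space scale lt0 lt1 v" and xy: "lt_ext lt0 (v x) (v y)"
  shows "v (x + y) = v x"
proof -
  have o: "ordered_vs scale lt0" using H unfolding hamel_space_def by blast
  have vs: "vector_space scale" using H unfolding hamel_space_def by blast
  have m1: "\<And>x y. le_ext lt0 (min_ext lt0 (v x) (v y)) (v (x + y))"
    using H unfolding hamel_space_def by blast
  have sc: "\<And>x l. l \<noteq> 0 \<Longrightarrow> v (scale l x) = v x"
    using H unfolding hamel_space_def by blast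
  have neg: "v (- y) = v y"
  proof -
    have "scale (-1) y = - y" using module.scale_minus_left[OF vs[unfolded module_iff_vector_space[symmetric]], of 1 y]
      module.scale_one[OF vs[unfolded module_iff_vector_space[symmetric]]] by simp
    then show ?thesis using sc[of "-1" y] by simp
  qed
  have "min_ext lt0 (v x) (v y) = v x" using xy unfolding min_ext_def le_ext_def by auto
  then have h1: "v x = v (x+y) \<or> lt_ext lt0 (v x) (v (x+y))" using m1[of x y] unfolding le_ext_def by simp
  show ?thesis
  proof (rule ccontr)
    assume "v (x + y) \<noteq> v x"
    with h1 have A: "lt_ext lt0 (v x) (v (x+y))" by simp
    have "lt_ext lt0 (v x) (min_ext lt0 (v (x+y)) (v (-y)))"
      using A xy neg unfolding min_ext_def by auto
    moreover have "le_ext lt0 (min_ext lt0 (v (x+y)) (v (-y))) (v x)"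
      using m1[of "x+y" "-y"] by simp
    ultimately show False unfolding le_ext_def
      using L_irrefl[OF o] L_trans[OF o] by metis
  qed
qed

lemma v_neg:
  assumes H: "hamel_space scale lt0 lt1 v" shows "v (- y) = v y"
proof -
  have vs: "vector_space scale" using H unfolding hamel_space_def by blast
  have sc: "\<And>x l. l \<noteq> 0 \<Longrightarrow> v (scale l x) = v x"
    using H unfolding hamel_space_def by blast
  have "scale (-1) y = - y" using module.scale_minus_left[OF vs[unfolded module_iff_vector_space[symmetric]], of 1 y]
      module.scale_one[OF vs[unfolded module_iff_vector_space[symmetric]]] by simp
  then show ?thesis using sc[of "-1" y] by simp
qed

definition pr2 :: "'i \<Rightarrow> 'i \<Rightarrow> nat \<Rightarrow> 'i" where
  "pr2 i j = (\<lambda>k. if k = 0 then i else j)"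

lemma indisc2:
  assumes "indisc_over scale lt0 lt1 v J x y B" "i \<in> J" "j \<in> J" "k \<in> J" "l \<in> J"
    "i < j" "k < l"
  shows "sat scale lt0 lt1 v (seq_env 2 (pr2 i j) x y (\<lambda>_. None)) \<phi> \<longleftrightarrow>
         sat scale lt0 lt1 v (seq_env 2 (pr2 k l) x y (\<lambda>_. None)) \<phi>"
proof -
  have "(\<forall>m<2. pr2 i j m \<in> J \<and> pr2 k l m \<in> J) \<and>
        (\<forall>m n. m < n \<and> n < 2 \<longrightarrow> pr2 i j m < pr2 i j n \<and> pr2 k l m < pr2 k l n) \<and>
        (\<forall>m. (\<lambda>_. None) m \<in> insert None (Some ` B))"
    using assms unfolding pr2_def by auto
  moreover have "\<forall>\<phi> n s t p.
        (\<forall>k<n. s k \<in> J \<and> t k \<in> J) \<and>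
        (\<forall>k l. k < l \<and> l < n \<longrightarrow> s k < s l \<and> t k < t l) \<and>
        (\<forall>k. p k \<in> insert None (Some ` B)) \<longrightarrow>
        (sat scale lt0 lt1 v (seq_env n s x y p) \<phi> \<longleftrightarrow> sat scale lt0 lt1 v (seq_env n t x y p) \<phi>)"
    using assms(1) unfolding indisc_over_def by assumption
  ultimately show ?thesis
    apply -
    apply (drule spec[of _ \<phi>], drule spec[of _ 2], drule spec[of _ "pr2 i j"],
        drule spec[of _ "pr2 k l"], drule spec[of _ "\<lambda>_. None"])
    by (erule mp)
qed

lemma env_vals:
  "seq_env 2 (pr2 i j) x y p 0 = x i"
  "seq_env 2 (pr2 i j) x y p 1 = y i"
  "seq_env 2 (pr2 i j) x y p (Suc 0) = y i"
  "seq_env 2 (pr2 i j) x y p 2 = x j"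
  "seq_env 2 (pr2 i j) x y p 3 = y j"
  unfolding seq_env_def pr2_def by auto

theorem lemma5p5:
  fixes scale :: "'c::linordered_field \<Rightarrow> 'g::ab_group_add \<Rightarrow> 'g"
    and lt0 lt1 :: "'g \<Rightarrow> 'g \<Rightarrow> bool"
    and v :: "'g \<Rightarrow> 'g option"
    and a :: "'i::linorder \<Rightarrow> 'g"
    and a' :: "'i \<Rightarrow> 'g option"
    and b :: 'g and c :: 'i
  assumes "hamel_space scale lt0 lt1 v"
    and "independent_hs lt0 lt1"
    and "dense_hs lt0 v"
    and "infinite {i. i < c}"
    and "infinite {i. c < i}"
    and "\<forall>i. a' i \<in> range v"
    and "indisc_over scale lt0 lt1 v UNIV (\<lambda>i. Some (a i)) a' {}"
    and "\<exists>i j. a i \<noteq> a j"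
    and "\<exists>i j. a' i \<noteq> a' j"
    and "indisc_over scale lt0 lt1 v (UNIV - {c}) (\<lambda>i. Some (a i)) a' {b}"
    and "\<forall>i. i \<noteq> c \<longrightarrow> v (a i - b) = a' i"
  shows "v (a c - b) = a' c"
proof -
  note H = assms(1)
  have o: "ordered_vs scale lt0" using H unfolding hamel_space_def by blast
  have vs: "vector_space scale" using H unfolding hamel_space_def by blast
  have sm: "\<And>z. scale (-1) z = - z" using module.scale_minus_left[OF vs[unfolded module_iff_vector_space[symmetric]], of 1]
      module.scale_one[OF vs[unfolded module_iff_vector_space[symmetric]]] by simp
  note ind = indisc2[OF assms(7), simplified]
  obtain i where i: "i < c" using assms(4) by (metis (mono_tags) empty_Collect_eq finite.emptyI)
  obtain j where j: "c < j" using assms(5) by (metis (mono_tags) empty_Collect_eq finite.emptyI)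
  have ij: "i < j" using i j by simp
  have vb: "\<And>k. k \<noteq> c \<Longrightarrow> v (a k - b) = a' k" using assms(11) by blast
  have dist: "a' k \<noteq> a' l" if "k < l" for k l
  proof -
    obtain p q where pq: "a' p \<noteq> a' q" using assms(9) by blast
    then have "p \<noteq> q" by blast
    then obtain p' q' where "p' < q'" "a' p' \<noteq> a' q'" using pq
      by (metis linorder_neqE)
    then have "\<not> sat scale lt0 lt1 v (seq_env 2 (pr2 p' q') (\<lambda>i. Some (a i)) a' (\<lambda>_. None)) (Eq (Var 1) (Var 3))"
      by (simp add: env_vals)
    then have "\<not> sat scale lt0 lt1 v (seq_env 2 (pr2 k l) (\<lambda>i. Some (a i)) a' (\<lambda>_. None)) (Eq (Var 1) (Var 3))"
      using ind[OF \<open>p' < q'\<close> that] by blast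
    then show ?thesis by (simp add: env_vals)
  qed
  have trans_ord: "lt_ext lt0 (a' k) (a' l)"
    if "lt_ext lt0 (a' i) (a' j)" "k < l" for k l
  proof -
    have "sat scale lt0 lt1 v (seq_env 2 (pr2 i j) (\<lambda>i. Some (a i)) a' (\<lambda>_. None)) (Lt0 (Var 1) (Var 3))"
      using that(1) by (simp add: env_vals)
    then have "sat scale lt0 lt1 v (seq_env 2 (pr2 k l) (\<lambda>i. Some (a i)) a' (\<lambda>_. None)) (Lt0 (Var 1) (Var 3))"
      using ind[OF ij that(2)] by blast
    then show ?thesis by (simp add: env_vals)
  qed
  have vneg2: "\<And>x y. v (x - y) = v (y - x)" using v_neg[OF H] by (metis minus_diff_eq)
  have ci: "i \<noteq> c" "j \<noteq> c" using i j by auto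
  have "lt_ext lt0 (a' i) (a' j) \<or> lt_ext lt0 (a' j) (a' i)"
    using L_total[OF o dist[OF ij]] .
  then show ?thesis
  proof
    assume inc: "lt_ext lt0 (a' i) (a' j)"
    have "v (a i - a j) = a' i"
    proof -
      have "v ((a i - b) + (- (a j - b))) = v (a i - b)"
        by (rule strict_ultra[OF H]) (simp add: vneg2[of b "a j"] vb ci inc)
      then show ?thesis using vb[OF ci(1)] by simp
    qed
    then have "sat scale lt0 lt1 v (seq_env 2 (pr2 i j) (\<lambda>i. Some (a i)) a' (\<lambda>_. None))
       (Eq (Val (Add (Var 0) (Smul (-1) (Var 2)))) (Var 1))"
      by (simp add: env_vals sm)
    then have "sat scale lt0 lt1 v (seq_env 2 (pr2 c j) (\<lambda>i. Some (a i)) a' (\<lambda>_. None))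
       (Eq (Val (Add (Var 0) (Smul (-1) (Var 2)))) (Var 1))"
      using ind[OF ij j] by blast
    then have vc: "v (a c - a j) = a' c" by (simp add: env_vals sm)
    have "v ((a c - a j) + (a j - b)) = v (a c - a j)"
      by (rule strict_ultra[OF H]) (simp add: vc vb ci trans_ord[OF inc j])
    then show ?thesis using vc by simp
  next
    assume dec: "lt_ext lt0 (a' j) (a' i)"
    have trans_ord2: "lt_ext lt0 (a' l) (a' k)" if "k < l" for k l
    proof -
      have "sat scale lt0 lt1 v (seq_env 2 (pr2 i j) (\<lambda>i. Some (a i)) a' (\<lambda>_. None)) (Lt0 (Var 3) (Var 1))"
        using dec by (simp add: env_vals)
      then have "sat scale lt0 lt1 v (seq_env 2 (pr2 k l) (\<lambda>i. Some (a i)) a' (\<lambda>_. None)) (Lt0 (Var 3) (Var 1))"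
        using ind[OF ij that] by blast
      then show ?thesis by (simp add: env_vals)
    qed
    have "v (a j - a i) = a' j"
    proof -
      have "v ((a j - b) + (- (a i - b))) = v (a j - b)"
        by (rule strict_ultra[OF H]) (simp add: vneg2[of b "a i"] vb ci dec)
      then show ?thesis using vb[OF ci(2)] by simp
    qed
    then have "sat scale lt0 lt1 v (seq_env 2 (pr2 i j) (\<lambda>i. Some (a i)) a' (\<lambda>_. None))
       (Eq (Val (Add (Var 2) (Smul (-1) (Var 0)))) (Var 3))"
      by (simp add: env_vals sm)
    then have "sat scale lt0 lt1 v (seq_env 2 (pr2 i c) (\<lambda>i. Some (a i)) a' (\<lambda>_. None))
       (Eq (Val (Add (Var 2) (Smul (-1) (Var 0)))) (Var 3))"
      using ind[OF ij i] by blast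
    then have vc: "v (a c - a i) = a' c" by (simp add: env_vals sm)
    have "v ((a c - a i) + (a i - b)) = v (a c - a i)"
      by (rule strict_ultra[OF H]) (simp add: vc vb ci trans_ord2[OF i])
    then show ?thesis using vc by simp
  qed
qed

end
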